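(* Let $K=\mathbb{R}$ and assume $\tau_{(i)}>0$, $\eta_{(i)}>-1$, $\eta_{(i)}\neq0$ for all $i\in\Omega$, where $|\Omega|=n$. Let $\Theta=\{\pi(\Omega,M)\mid M\in\mathcal{I}(\overline{\mathbf{P}})\}$. Then $|\Theta|\geqslant n+1$, and the following are equivalent: (1) $|\Theta|=n+1$; (2) for any $C,D\in\mathcal{I}(\overline{\mathbf{P}})$, $|C|=|D|$ implies $\pi(\Omega,C)=\pi(\Omega,D)$; (3) for any $C,D\in\mathcal{I}(\overline{\mathbf{P}})$, $\pi(\Omega,C)=\pi(\Omega,D)$ if and only if $|C|=|D|$; (4) $\mathbf{P}$ is hierarchical, and for any $u,v\in\Omega$ with $\mathrm{len}(u)=\mathrm{len}(v)$ we have $\eta_{(u)}=\eta_{(v)}$.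
   Context: $\Omega$ is a finite set and $\mathbf{P}=(\Omega,\preccurlyeq_{\mathbf{P}})$ a poset; $\overline{\mathbf{P}}$ is the dual poset and $\mathcal{I}(\overline{\mathbf{P}})$ its set of ideals (up-closed subsets of $\mathbf{P}$). For $Y\subseteq\Omega$: $\max(Y)$ is the set of maximal elements of $Y$ w.r.t. $\preccurlyeq_{\mathbf{P}}$; $\mathcal{I}(Y)$ is the set of down-closed subsets of $Y$. $\tau,\eta\in\mathbb{R}^{\Omega}$. For $D,I\subseteq\Omega$, $\varphi(D,I)=(-1)^{|I\cap D|}\big(\prod_{i\in I-\max(I)}\tau_{(i)}\big)\big(\prod_{i\in\max(I)-D}\eta_{(i)}\big)$ if $I\cap D\subseteq\max(I)$, and $0$ otherwise; for $D\subseteq Y\subseteq\Omega$, $\pi(Y,D)=\sum_{I\in\mathcal{I}(Y)}\varphi(D,I)x^{|I|}\in\mathbb{R}[x]$. $\mathrm{len}(y)$ is the largest cardinality of a chain in $\mathbf{P}$ with greatest element $y$; $\mathbf{P}$ is hierarchical if $\mathrm{len}(u)+1\leqslant\mathrm{len}(v)$ implies $u\preccurlyeq_{\mathbf{P}}v$. *)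

theory Defs
  imports "HOL-Computational_Algebra.Polynomial"
begin

definition is_poset :: "'a set \<Rightarrow> ('a \<Rightarrow> 'a \<Rightarrow> bool) \<Rightarrow> bool" where
  "is_poset Om le \<longleftrightarrow>
     (\<forall>x\<in>Om. le x x) \<and>
     (\<forall>x\<in>Om. \<forall>y\<in>Om. le x y \<and> le y x \<longrightarrow> x = y) \<and>
     (\<forall>x\<in>Om. \<forall>y\<in>Om. \<forall>z\<in>Om. le x y \<and> le y z \<longrightarrow> le x z)"

definition maxel :: "('a \<Rightarrow> 'a \<Rightarrow> bool) \<Rightarrow> 'a set \<Rightarrow> 'a set" where
  "maxel le Y = {y \<in> Y. \<forall>z\<in>Y. le y z \<longrightarrow> z = y}"

definition down_sets :: "('a \<Rightarrow> 'a \<Rightarrow> bool) \<Rightarrow> 'a set \<Rightarrow> 'a set set" where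
  "down_sets le Y = {I. I \<subseteq> Y \<and> (\<forall>x\<in>I. \<forall>y\<in>Y. le y x \<longrightarrow> y \<in> I)}"

text \<open>Ideals of the dual poset: up-closed subsets of Om.\<close>
definition up_sets :: "('a \<Rightarrow> 'a \<Rightarrow> bool) \<Rightarrow> 'a set \<Rightarrow> 'a set set" where
  "up_sets le Om = {M. M \<subseteq> Om \<and> (\<forall>x\<in>M. \<forall>y\<in>Om. le x y \<longrightarrow> y \<in> M)}"

definition phi :: "('a \<Rightarrow> 'a \<Rightarrow> bool) \<Rightarrow> ('a \<Rightarrow> real) \<Rightarrow> ('a \<Rightarrow> real) \<Rightarrow> 'a set \<Rightarrow> 'a set \<Rightarrow> real" where
  "phi le \<tau> \<eta> D I =
     (if I \<inter> D \<subseteq> maxel le I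
      then (-1) ^ card (I \<inter> D) * (\<Prod>i\<in>I - maxel le I. \<tau> i) * (\<Prod>i\<in>maxel le I - D. \<eta> i)
      else 0)"

definition piP :: "('a \<Rightarrow> 'a \<Rightarrow> bool) \<Rightarrow> ('a \<Rightarrow> real) \<Rightarrow> ('a \<Rightarrow> real) \<Rightarrow> 'a set \<Rightarrow> 'a set \<Rightarrow> real poly" where
  "piP le \<tau> \<eta> Y D = (\<Sum>I\<in>down_sets le Y. monom (phi le \<tau> \<eta> D I) (card I))"

definition is_chain :: "'a set \<Rightarrow> ('a \<Rightarrow> 'a \<Rightarrow> bool) \<Rightarrow> 'a set \<Rightarrow> bool" where
  "is_chain Om le C \<longleftrightarrow> C \<subseteq> Om \<and> (\<forall>x\<in>C. \<forall>y\<in>C. le x y \<or> le y x)"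

definition len :: "'a set \<Rightarrow> ('a \<Rightarrow> 'a \<Rightarrow> bool) \<Rightarrow> 'a \<Rightarrow> nat" where
  "len Om le y = Max {card C | C. is_chain Om le C \<and> y \<in> C \<and> (\<forall>c\<in>C. le c y)}"

definition hierarchical :: "'a set \<Rightarrow> ('a \<Rightarrow> 'a \<Rightarrow> bool) \<Rightarrow> bool" where
  "hierarchical Om le \<longleftrightarrow> (\<forall>u\<in>Om. \<forall>v\<in>Om. len Om le u + 1 \<le> len Om le v \<longrightarrow> le u v)"

end

theory Submission
  imports Defs
begin


locale pos =
  fixes Om :: "'a set" and le :: "'a \<Rightarrow> 'a \<Rightarrow> bool"
  assumes fin: "finite Om" and poset: "is_poset Om le"
begin

lemma refl: "x \<in> Om \<Longrightarrow> le x x" using poset unfolding is_poset_def by blast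
lemma antisym: "x \<in> Om \<Longrightarrow> y \<in> Om \<Longrightarrow> le x y \<Longrightarrow> le y x \<Longrightarrow> x = y"
  using poset unfolding is_poset_def by blast
lemma trans: "x \<in> Om \<Longrightarrow> y \<in> Om \<Longrightarrow> z \<in> Om \<Longrightarrow> le x y \<Longrightarrow> le y z \<Longrightarrow> le x z"
  using poset unfolding is_poset_def by blast

definition chs where "chs y = {card C | C. is_chain Om le C \<and> y \<in> C \<and> (\<forall>c\<in>C. le c y)}"

lemma chs_fin: "finite (chs y)"
proof -
  have "chs y \<subseteq> {0..card Om}"
    unfolding chs_def is_chain_def using card_mono[OF fin] by auto
  thus ?thesis using finite_subset by blast
qed

lemma len_ge: "is_chain Om le C \<Longrightarrow> y \<in> C \<Longrightarrow> \<forall>c\<in>C. le c y \<Longrightarrow> card C \<le> len Om le y"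
  unfolding len_def using chs_fin[of y] unfolding chs_def by (intro Max_ge) auto

lemma len_ex: assumes "y \<in> Om"
  shows "\<exists>C. is_chain Om le C \<and> y \<in> C \<and> (\<forall>c\<in>C. le c y) \<and> card C = len Om le y"
proof -
  have "is_chain Om le {y}" using assms refl unfolding is_chain_def by auto
  hence ne: "chs y \<noteq> {}" unfolding chs_def using refl[OF assms] by blast
  have "len Om le y \<in> chs y" unfolding len_def using Max_in[OF chs_fin ne] unfolding chs_def by simp
  thus ?thesis unfolding chs_def by auto
qed

lemma len_mono: assumes "x \<in> Om" "y \<in> Om" "le x y" "x \<noteq> y"
  shows "len Om le x < len Om le y"
proof -
  obtain C where C: "is_chain Om le C" "x \<in> C" "\<forall>c\<in>C. le c x" "card C = len Om le x"
    using len_ex[OF assms(1)] by blast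
  have CO: "C \<subseteq> Om" using C(1) unfolding is_chain_def by auto
  have fC: "finite C" using CO fin finite_subset by blast
  have yC: "y \<notin> C" using C(3) antisym assms CO by blast
  have cy: "\<forall>c\<in>C. le c y" using C(3) CO assms trans by blast
  have ch: "is_chain Om le (insert y C)" using C(1) cy CO assms refl
    unfolding is_chain_def by auto
  have "\<forall>c\<in>insert y C. le c y" using C(3) CO assms trans refl by blast
  from len_ge[OF ch _ this] have "card (insert y C) \<le> len Om le y" by simp
  thus ?thesis using C(4) yC fC by simp
qed

definition dn where "dn x = {y\<in>Om. le y x}"


lemma DS_fin: "finite (down_sets le Om)"
proof -
  have "down_sets le Om \<subseteq> Pow Om" unfolding down_sets_def by auto
  thus ?thesis using fin by (meson finite_Pow_iff finite_subset)
qed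

lemma DS_sub: "I \<in> down_sets le Om \<Longrightarrow> I \<subseteq> Om" unfolding down_sets_def by auto
lemma US_sub: "I \<in> up_sets le Om \<Longrightarrow> I \<subseteq> Om" unfolding up_sets_def by auto

lemma dn_DS: "x \<in> Om \<Longrightarrow> dn x \<in> down_sets le Om"
  unfolding down_sets_def dn_def using trans by blast

lemma dn_sub: "I \<in> down_sets le Om \<Longrightarrow> x \<in> I \<Longrightarrow> dn x \<subseteq> I"
  unfolding down_sets_def dn_def by blast

lemma dn_self: "x \<in> Om \<Longrightarrow> x \<in> dn x" unfolding dn_def using refl by auto

lemma maxel_dn: assumes "x \<in> Om" shows "maxel le (dn x) = {x}"
  unfolding maxel_def dn_def using assms refl antisym by auto

lemma dn_psub: assumes "x \<in> Om" "y \<in> Om" "le x y" "x \<noteq> y" shows "card (dn x) < card (dn y)"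
proof -
  have "dn x \<subset> dn y" unfolding dn_def using assms trans antisym refl by blast
  moreover have "finite (dn y)" unfolding dn_def using fin by auto
  ultimately show ?thesis by (simp add: psubset_card_mono)
qed

end

lemma maxel_sub: "maxel le I \<subseteq> I" unfolding maxel_def by auto

lemma phi_cong: "I \<inter> D = I \<inter> D' \<Longrightarrow> phi le t e D I = phi le t e D' I"
proof -
  assume h: "I \<inter> D = I \<inter> D'"
  have "maxel le I - D = maxel le I - D'" using h maxel_sub[of le I] unfolding maxel_def by blast
  thus ?thesis unfolding phi_def using h by simp
qed

lemma coeff_piP: "coeff (piP le t e Om D) k = (\<Sum>I\<in>down_sets le Om. if card I = k then phi le t e D I else 0)"
  unfolding piP_def by (simp add: coeff_sum coeff_monom eq_commute)

definition lexl :: "real poly \<Rightarrow> real poly \<Rightarrow> bool" where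
  "lexl p q \<longleftrightarrow> (\<exists>k. coeff p k < coeff q k \<and> (\<forall>j<k. coeff p j = coeff q j))"

lemma lexl_irrefl: "\<not> lexl p p" unfolding lexl_def by auto

lemma lexl_trans: assumes "lexl p q" "lexl q r" shows "lexl p r"
proof -
  obtain k1 where k1: "coeff p k1 < coeff q k1" "\<forall>j<k1. coeff p j = coeff q j"
    using assms(1) unfolding lexl_def by blast
  obtain k2 where k2: "coeff q k2 < coeff r k2" "\<forall>j<k2. coeff q j = coeff r j"
    using assms(2) unfolding lexl_def by blast
  show ?thesis unfolding lexl_def
  proof (cases k1 k2 rule: linorder_cases)
    case less
    thus "\<exists>k. coeff p k < coeff r k \<and> (\<forall>j<k. coeff p j = coeff r j)"
      using k1 k2 by (intro exI[of _ k1]) auto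
  next
    case equal
    thus "\<exists>k. coeff p k < coeff r k \<and> (\<forall>j<k. coeff p j = coeff r j)"
      using k1 k2 by (intro exI[of _ k1]) auto
  next
    case greater
    thus "\<exists>k. coeff p k < coeff r k \<and> (\<forall>j<k. coeff p j = coeff r j)"
      using k1 k2 by (intro exI[of _ k2]) auto
  qed
qed

lemma lexl_asym: "lexl p q \<Longrightarrow> \<not> lexl q p"
  using lexl_trans lexl_irrefl by blast

locale posw = pos +
  fixes \<tau> \<eta> :: "'a \<Rightarrow> real"
  assumes tau_pos: "\<forall>i\<in>Om. \<tau> i > 0" and eta_gt: "\<forall>i\<in>Om. \<eta> i > -1"
begin

lemma key:
  assumes D: "D \<in> up_sets le Om" and d: "d \<in> Om" "d \<notin> D" and D': "insert d D \<in> up_sets le Om"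
  and k: "k \<le> card (dn d)"
  shows "coeff (piP le \<tau> \<eta> Om D) k - coeff (piP le \<tau> \<eta> Om (insert d D)) k =
     (if k = card (dn d) then (1 + \<eta> d) * prod \<tau> (dn d - {d}) else 0)"
proof -
  let ?D' = "insert d D"
  let ?c = "phi le \<tau> \<eta> D (dn d) - phi le \<tau> \<eta> ?D' (dn d)"
  have disj: "dn d \<inter> D = {}" using D d unfolding up_sets_def dn_def by blast
  have c: "?c = (1 + \<eta> d) * prod \<tau> (dn d - {d})"
  proof -
    have i2: "dn d \<inter> ?D' = {d}" using disj dn_self[OF d(1)] by blast
    show ?thesis unfolding phi_def maxel_dn[OF d(1)] using disj i2 d(2) by (simp add: algebra_simps insert_Diff_if)
  qed
  have tm: "(if card I = k then phi le \<tau> \<eta> D I - phi le \<tau> \<eta> ?D' I else 0) =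
      (if I = dn d then (if k = card (dn d) then ?c else 0) else 0)" if I: "I \<in> down_sets le Om" for I
  proof (cases "d \<in> I")
    case False
    hence "I \<inter> D = I \<inter> ?D'" by blast
    hence "phi le \<tau> \<eta> D I = phi le \<tau> \<eta> ?D' I" by (rule phi_cong)
    moreover have "I \<noteq> dn d" using False dn_self[OF d(1)] by blast
    ultimately show ?thesis by simp
  next
    case True
    have sub: "dn d \<subseteq> I" using dn_sub[OF I True] .
    have fI: "finite I" using DS_sub[OF I] fin finite_subset by blast
    show ?thesis
    proof (cases "card I = k")
      case True
      hence "card I \<le> card (dn d)" using k by simp
      hence "I = dn d" using sub fI by (metis card_seteq)
      thus ?thesis using True by simp
    next
      case False
      thus ?thesis by auto
    qed
  qed
  have "coeff (piP le \<tau> \<eta> Om D) k - coeff (piP le \<tau> \<eta> Om ?D') k =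
     (\<Sum>I\<in>down_sets le Om. if card I = k then phi le \<tau> \<eta> D I - phi le \<tau> \<eta> ?D' I else 0)"
    unfolding coeff_piP sum_subtractf[symmetric] by (rule sum.cong) auto
  also have "\<dots> = (\<Sum>I\<in>down_sets le Om. if I = dn d then (if k = card (dn d) then ?c else 0) else 0)"
    using tm by (rule sum.cong[OF HOL.refl])
  also have "\<dots> = (if k = card (dn d) then ?c else 0)"
    using DS_fin dn_DS[OF d(1)] by simp
  finally show ?thesis using c by simp
qed


lemma step_less:
  assumes D: "D \<in> up_sets le Om" and d: "d \<in> Om" "d \<notin> D" and D': "insert d D \<in> up_sets le Om"
  shows "lexl (piP le \<tau> \<eta> Om (insert d D)) (piP le \<tau> \<eta> Om D)"
proof -
  have pos: "0 < (1 + \<eta> d) * prod \<tau> (dn d - {d})"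
    using eta_gt tau_pos d(1) unfolding dn_def by (intro mult_pos_pos prod_pos) auto
  let ?h = "card (dn d)"
  have e1: "coeff (piP le \<tau> \<eta> Om D) ?h - coeff (piP le \<tau> \<eta> Om (insert d D)) ?h = (1 + \<eta> d) * prod \<tau> (dn d - {d})"
    using key[OF D d D' order_refl] by simp
  have e2: "coeff (piP le \<tau> \<eta> Om (insert d D)) j = coeff (piP le \<tau> \<eta> Om D) j" if j: "j < ?h" for j
    using key[OF D d D', of j] j by simp
  show ?thesis unfolding lexl_def
    using e1 e2 pos by (intro exI[of _ "card (dn d)"]) auto
qed

lemma US_remove: assumes C: "C \<in> up_sets le Om" "C \<noteq> {}"
  shows "\<exists>x\<in>C. C - {x} \<in> up_sets le Om"
proof -
  obtain x0 where "x0 \<in> C" using C by blast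
  then obtain x where x: "x \<in> C" and mn: "\<forall>y. y \<in> C \<longrightarrow> card (dn x) \<le> card (dn y)"
    using ex_has_least_nat[of "\<lambda>x. x \<in> C" x0 "\<lambda>x. card (dn x)"] by blast
  have CO: "C \<subseteq> Om" using US_sub[OF C(1)] .
  have "C - {x} \<in> up_sets le Om"
    unfolding up_sets_def
  proof (intro CollectI conjI ballI impI)
    show "C - {x} \<subseteq> Om" using CO by blast
  next
    fix y z assume y: "y \<in> C - {x}" and z: "z \<in> Om" and yz: "le y z"
    have "z \<in> C" using C(1) y z yz unfolding up_sets_def by blast
    moreover have "z \<noteq> x"
    proof
      assume "z = x"
      hence "card (dn y) < card (dn x)" using dn_psub[of y x] y yz CO x by blast
      thus False using mn y by force
    qed
    ultimately show "z \<in> C - {x}" by blast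
  qed
  thus ?thesis using x by blast
qed

lemma US_add: assumes C: "C \<in> up_sets le Om" "C \<noteq> Om"
  shows "\<exists>x\<in>Om - C. insert x C \<in> up_sets le Om"
proof -
  have CO: "C \<subseteq> Om" using US_sub[OF C(1)] .
  obtain x0 where "x0 \<in> Om - C" using C CO by blast
  then obtain x where x: "x \<in> Om - C" and mx: "\<forall>y. y \<in> Om - C \<longrightarrow> card Om - card (dn x) \<le> card Om - card (dn y)"
    using ex_has_least_nat[of "\<lambda>x. x \<in> Om - C" x0 "\<lambda>x. card Om - card (dn x)"] by blast
  have "insert x C \<in> up_sets le Om"
    unfolding up_sets_def
  proof (intro CollectI conjI ballI impI)
    show "insert x C \<subseteq> Om" using CO x by blast
  next
    fix y z assume y: "y \<in> insert x C" and z: "z \<in> Om" and yz: "le y z"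
    show "z \<in> insert x C"
    proof (cases "y \<in> C")
      case True
      thus ?thesis using C(1) z yz unfolding up_sets_def by blast
    next
      case False
      hence yx: "y = x" using y by blast
      show ?thesis
      proof (rule ccontr)
        assume nz: "z \<notin> insert x C"
        hence "card (dn x) < card (dn z)" using dn_psub[of x z] x z yz yx by blast
        moreover have "card (dn z) \<le> card Om" unfolding dn_def using fin by (intro card_mono) auto
        moreover have "card Om - card (dn x) \<le> card Om - card (dn z)" using mx nz z by blast
        ultimately show False by linarith
      qed
    qed
  qed
  thus ?thesis using x by blast
qed

abbreviation "Th \<equiv> piP le \<tau> \<eta> Om ` up_sets le Om"

lemma Th_fin: "finite Th"
proof -
  have "up_sets le Om \<subseteq> Pow Om" unfolding up_sets_def by auto
  hence "finite (up_sets le Om)" using fin by (meson finite_Pow_iff finite_subset)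
  thus ?thesis by simp
qed

lemma R1: "C \<in> up_sets le Om \<Longrightarrow> card C \<le> card {t\<in>Th. lexl (piP le \<tau> \<eta> Om C) t}"
proof (induction "card C" arbitrary: C)
  case 0
  thus ?case by simp
next
  case (Suc n)
  hence "C \<noteq> {}" by auto
  then obtain x where x: "x \<in> C" and C': "C - {x} \<in> up_sets le Om" using US_remove Suc.prems by blast
  have CO: "C \<subseteq> Om" using US_sub[OF Suc.prems] .
  have fC: "finite C" using CO fin finite_subset by blast
  have cC': "card (C - {x}) = n" using Suc.hyps(2) x fC by simp
  have ins: "insert x (C - {x}) = C" using x by blast
  have lt: "lexl (piP le \<tau> \<eta> Om C) (piP le \<tau> \<eta> Om (C - {x}))"
    using step_less[OF C', of x] x CO ins Suc.prems by auto
  let ?A = "{t\<in>Th. lexl (piP le \<tau> \<eta> Om C) t}"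
  let ?A' = "{t\<in>Th. lexl (piP le \<tau> \<eta> Om (C - {x})) t}"
  have "insert (piP le \<tau> \<eta> Om (C - {x})) ?A' \<subseteq> ?A"
    using lt lexl_trans C' by blast
  moreover have "piP le \<tau> \<eta> Om (C - {x}) \<notin> ?A'" using lexl_irrefl by blast
  moreover have "finite ?A" using Th_fin by simp
  ultimately have "card ?A' + 1 \<le> card ?A"
  proof -
    assume a1: "insert (piP le \<tau> \<eta> Om (C - {x})) ?A' \<subseteq> ?A" and a2: "piP le \<tau> \<eta> Om (C - {x}) \<notin> ?A'" and a3: "finite ?A"
    have "finite ?A'" using Th_fin by simp
    hence "card (insert (piP le \<tau> \<eta> Om (C - {x})) ?A') = card ?A' + 1" using a2 by simp
    moreover have "card (insert (piP le \<tau> \<eta> Om (C - {x})) ?A') \<le> card ?A" using card_mono[OF a3 a1] .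
    ultimately show ?thesis by simp
  qed
  moreover have "n \<le> card ?A'" using Suc.hyps(1)[OF cC'[symmetric] C'] cC' by simp
  ultimately show ?case using Suc.hyps(2) by simp
qed

lemma R2: "C \<in> up_sets le Om \<Longrightarrow> card Om - card C \<le> card {t\<in>Th. lexl t (piP le \<tau> \<eta> Om C)}"
proof (induction "card Om - card C" arbitrary: C)
  case 0
  thus ?case by simp
next
  case (Suc n)
  have CO: "C \<subseteq> Om" using US_sub[OF Suc.prems] .
  hence "C \<noteq> Om" using Suc.hyps(2) by auto
  then obtain x where x: "x \<in> Om - C" and C': "insert x C \<in> up_sets le Om" using US_add Suc.prems by blast
  have fC: "finite C" using CO fin finite_subset by blast
  have cC': "card Om - card (insert x C) = n" using Suc.hyps(2) x fC by simp
  have lt: "lexl (piP le \<tau> \<eta> Om (insert x C)) (piP le \<tau> \<eta> Om C)"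
    using step_less[OF Suc.prems, of x] x C' by auto
  let ?A = "{t\<in>Th. lexl t (piP le \<tau> \<eta> Om C)}"
  let ?A' = "{t\<in>Th. lexl t (piP le \<tau> \<eta> Om (insert x C))}"
  have "insert (piP le \<tau> \<eta> Om (insert x C)) ?A' \<subseteq> ?A"
    using lt lexl_trans C' by blast
  moreover have "piP le \<tau> \<eta> Om (insert x C) \<notin> ?A'" using lexl_irrefl by blast
  moreover have "finite ?A" using Th_fin by simp
  ultimately have "card ?A' + 1 \<le> card ?A"
  proof -
    assume a1: "insert (piP le \<tau> \<eta> Om (insert x C)) ?A' \<subseteq> ?A" and a2: "piP le \<tau> \<eta> Om (insert x C) \<notin> ?A'" and a3: "finite ?A"
    have "finite ?A'" using Th_fin by simp
    hence "card (insert (piP le \<tau> \<eta> Om (insert x C)) ?A') = card ?A' + 1" using a2 by simp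
    moreover have "card (insert (piP le \<tau> \<eta> Om (insert x C)) ?A') \<le> card ?A" using card_mono[OF a3 a1] .
    ultimately show ?thesis by simp
  qed
  moreover have "n \<le> card ?A'" using Suc.hyps(1)[OF cC'[symmetric] C'] cC' by simp
  ultimately show ?case using Suc.hyps(2) by simp
qed


end

lemma card_above_strict:
  assumes T: "finite T" and p: "p \<in> T" and q: "q \<in> T" and pq: "lexl p q"
  shows "card {t\<in>T. lexl q t} < card {t\<in>T. lexl p t}"
proof -
  have s1: "{t\<in>T. lexl q t} \<subseteq> {t\<in>T. lexl p t}" using lexl_trans pq by blast
  have s2: "q \<in> {t\<in>T. lexl p t}" "q \<notin> {t\<in>T. lexl q t}" using q pq lexl_irrefl by auto
  have "{t\<in>T. lexl q t} \<subset> {t\<in>T. lexl p t}" using s1 s2 by blast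
  thus ?thesis by (rule psubset_card_mono[rotated]) (use T in simp)
qed
context posw begin
lemma empty_US: "{} \<in> up_sets le Om" unfolding up_sets_def by auto

lemma card_US: "C \<in> up_sets le Om \<Longrightarrow> card C \<le> card Om"
  using US_sub fin card_mono by blast

lemma P1: "card Om + 1 \<le> card Th"
proof -
  let ?B = "{t\<in>Th. lexl t (piP le \<tau> \<eta> Om {})}"
  have "card Om \<le> card ?B" using R2[OF empty_US] by simp
  moreover have "insert (piP le \<tau> \<eta> Om {}) ?B \<subseteq> Th" using empty_US by blast
  moreover have "piP le \<tau> \<eta> Om {} \<notin> ?B" using lexl_irrefl by blast
  moreover have "finite ?B" using Th_fin by simp
  ultimately show ?thesis using card_mono[OF Th_fin, of "insert (piP le \<tau> \<eta> Om {}) ?B"] by simp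
qed

lemma P2: assumes h: "\<forall>C\<in>up_sets le Om. \<forall>D\<in>up_sets le Om. card C = card D \<longrightarrow> piP le \<tau> \<eta> Om C = piP le \<tau> \<eta> Om D"
  shows "card Th \<le> card Om + 1"
proof -
  define g where "g k = piP le \<tau> \<eta> Om (SOME C. C \<in> up_sets le Om \<and> card C = k)" for k
  have "Th \<subseteq> g ` {0..card Om}"
  proof
    fix t assume "t \<in> Th"
    then obtain C where C: "C \<in> up_sets le Om" "t = piP le \<tau> \<eta> Om C" by blast
    have ex: "\<exists>C'. C' \<in> up_sets le Om \<and> card C' = card C" using C by blast
    let ?C' = "SOME C'. C' \<in> up_sets le Om \<and> card C' = card C"
    have s: "?C' \<in> up_sets le Om \<and> card ?C' = card C" using someI_ex[OF ex] .
    have "t = g (card C)" unfolding g_def using h C s by metis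
    moreover have "card C \<le> card Om" using card_US[OF C(1)] .
    ultimately show "t \<in> g ` {0..card Om}" by auto
  qed
  hence "card Th \<le> card (g ` {0..card Om})" by (rule card_mono[rotated]) auto
  also have "\<dots> \<le> card {0..card Om}" by (rule card_image_le) auto
  finally show ?thesis by simp
qed

lemma P3: assumes n: "card Th = card Om + 1" and C: "C \<in> up_sets le Om"
  shows "card {t\<in>Th. lexl (piP le \<tau> \<eta> Om C) t} = card C"
    and "Th = {t\<in>Th. lexl (piP le \<tau> \<eta> Om C) t} \<union> {t\<in>Th. lexl t (piP le \<tau> \<eta> Om C)} \<union> {piP le \<tau> \<eta> Om C}"
proof -
  let ?p = "piP le \<tau> \<eta> Om C"
  let ?A = "{t\<in>Th. lexl ?p t}"
  let ?B = "{t\<in>Th. lexl t ?p}"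
  have fA: "finite ?A" and fB: "finite ?B" using Th_fin by simp_all
  have dAB: "?A \<inter> ?B = {}" using lexl_asym by blast
  have pA: "?p \<notin> ?A \<union> ?B" using lexl_irrefl by blast
  have cU: "card (?A \<union> ?B \<union> {?p}) = card ?A + card ?B + 1"
    using fA fB dAB pA by (simp add: card_Un_disjoint)
  have sub: "?A \<union> ?B \<union> {?p} \<subseteq> Th" using C by blast
  have le1: "card (?A \<union> ?B \<union> {?p}) \<le> card Th" using card_mono[OF Th_fin sub] .
  have a: "card C \<le> card ?A" using R1[OF C] .
  have b: "card Om - card C \<le> card ?B" using R2[OF C] .
  have cO: "card C \<le> card Om" using card_US[OF C] .
  show "card ?A = card C" using cU le1 a b cO n by linarith
  have "card (?A \<union> ?B \<union> {?p}) = card Th" using cU le1 a b cO n by linarith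
  thus "Th = ?A \<union> ?B \<union> {?p}" using card_subset_eq[OF Th_fin sub] by simp
qed

lemma P4: assumes n: "card Th = card Om + 1" and C: "C \<in> up_sets le Om" and D: "D \<in> up_sets le Om"
  shows "piP le \<tau> \<eta> Om C = piP le \<tau> \<eta> Om D \<longleftrightarrow> card C = card D"
proof
  assume "piP le \<tau> \<eta> Om C = piP le \<tau> \<eta> Om D"
  thus "card C = card D" using P3(1)[OF n C] P3(1)[OF n D] by simp
next
  assume cd: "card C = card D"
  let ?p = "piP le \<tau> \<eta> Om C"
  let ?q = "piP le \<tau> \<eta> Om D"
  have pT: "?p \<in> Th" using C by blast
  have qT: "?q \<in> Th" using D by blast
  show "?p = ?q"
  proof (rule ccontr)
    assume ne: "?p \<noteq> ?q"
    from qT have "?q \<in> {t\<in>Th. lexl ?p t} \<union> {t\<in>Th. lexl t ?p} \<union> {?p}"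
      by (subst (asm) P3(2)[OF n C])
    hence "lexl ?p ?q \<or> lexl ?q ?p" using ne by auto
    thus False
    proof
      assume "lexl ?p ?q"
      from card_above_strict[OF Th_fin pT qT this]
      show False using P3(1)[OF n C] P3(1)[OF n D] cd by simp
    next
      assume "lexl ?q ?p"
      from card_above_strict[OF Th_fin qT pT this]
      show False using P3(1)[OF n C] P3(1)[OF n D] cd by simp
    qed
  qed
qed

end

context posw begin

lemma C0_facts:
  assumes u: "u \<in> Om" and v: "v \<in> Om" and nuv: "\<not> le u v" and nvu: "\<not> le v u"
  defines "C0 \<equiv> Om - (dn u \<union> dn v)"
  shows "C0 \<in> up_sets le Om" "u \<notin> C0" "insert u C0 \<in> up_sets le Om"
proof -
  show C0: "C0 \<in> up_sets le Om"
    unfolding up_sets_def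
  proof (intro CollectI conjI ballI impI)
    show "C0 \<subseteq> Om" unfolding C0_def by blast
  next
    fix x y assume x: "x \<in> C0" and y: "y \<in> Om" and xy: "le x y"
    have xO: "x \<in> Om" and nxu: "\<not> le x u" and nxv: "\<not> le x v" using x unfolding C0_def dn_def by auto
    show "y \<in> C0"
    proof (rule ccontr)
      assume "y \<notin> C0"
      hence "le y u \<or> le y v" using y unfolding C0_def dn_def by blast
      thus False
      proof
        assume "le y u" thus False using trans[OF xO y u xy] nxu by blast
      next
        assume "le y v" thus False using trans[OF xO y v xy] nxv by blast
      qed
    qed
  qed
  show "u \<notin> C0" unfolding C0_def using dn_self[OF u] by blast
  show "insert u C0 \<in> up_sets le Om"
    unfolding up_sets_def
  proof (intro CollectI conjI ballI impI)
    show "insert u C0 \<subseteq> Om" using u unfolding C0_def by blast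
  next
    fix x y assume x: "x \<in> insert u C0" and y: "y \<in> Om" and xy: "le x y"
    show "y \<in> insert u C0"
    proof (cases "x = u")
      case True
      show ?thesis
      proof (rule ccontr)
        assume "y \<notin> insert u C0"
        hence "le y u \<or> le y v" using y unfolding C0_def dn_def by blast
        thus False
        proof
          assume yu: "le y u"
          have "le u y" using xy True by simp
          hence "u = y" using antisym[OF u y] yu by blast
          thus False using \<open>y \<notin> insert u C0\<close> by blast
        next
          assume yv: "le y v"
          have "le u y" using xy True by simp
          thus False using trans[OF u y v] yv nuv by blast
        qed
      qed
    next
      case False
      hence "x \<in> C0" using x by blast
      thus ?thesis using C0 y xy unfolding up_sets_def by blast
    qed
  qed
qed

lemma incomp_eq:
  assumes h2: "\<forall>C\<in>up_sets le Om. \<forall>D\<in>up_sets le Om. card C = card D \<longrightarrow> piP le \<tau> \<eta> Om C = piP le \<tau> \<eta> Om D"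
  and u: "u \<in> Om" and v: "v \<in> Om" and nuv: "\<not> le u v" and nvu: "\<not> le v u"
  shows "card (dn u) = card (dn v) \<and> (1 + \<eta> u) * prod \<tau> (dn u - {u}) = (1 + \<eta> v) * prod \<tau> (dn v - {v})"
proof -
  define C0 where "C0 = Om - (dn u \<union> dn v)"
  have f1: "C0 \<in> up_sets le Om" "u \<notin> C0" "insert u C0 \<in> up_sets le Om"
    using C0_facts[OF u v nuv nvu] unfolding C0_def by blast+
  have f2: "C0 \<in> up_sets le Om" "v \<notin> C0" "insert v C0 \<in> up_sets le Om"
  proof -
    have e: "Om - (dn v \<union> dn u) = C0" unfolding C0_def by blast
    show "C0 \<in> up_sets le Om" "v \<notin> C0" "insert v C0 \<in> up_sets le Om"
      using C0_facts[OF v u nvu nuv] unfolding e by blast+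
  qed
  have fC0: "finite C0" unfolding C0_def using fin by simp
  have "card (insert u C0) = card (insert v C0)" using f1 f2 fC0 by simp
  hence eq: "piP le \<tau> \<eta> Om (insert u C0) = piP le \<tau> \<eta> Om (insert v C0)" using h2 f1 f2 by blast
  let ?P = "piP le \<tau> \<eta> Om C0"
  let ?cu = "(1 + \<eta> u) * prod \<tau> (dn u - {u})"
  let ?cv = "(1 + \<eta> v) * prod \<tau> (dn v - {v})"
  have ku: "coeff ?P k - coeff (piP le \<tau> \<eta> Om (insert v C0)) k = (if k = card (dn u) then ?cu else 0)"
    if "k \<le> card (dn u)" for k using key[OF f1(1) u f1(2) f1(3) that] eq by simp
  have kv: "coeff ?P k - coeff (piP le \<tau> \<eta> Om (insert v C0)) k = (if k = card (dn v) then ?cv else 0)"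
    if "k \<le> card (dn v)" for k using key[OF f2(1) v f2(2) f2(3) that] by simp
  have pu: "?cu > 0" using eta_gt tau_pos u unfolding dn_def by (intro mult_pos_pos prod_pos) auto
  have pv: "?cv > 0" using eta_gt tau_pos v unfolding dn_def by (intro mult_pos_pos prod_pos) auto
  have ceq: "card (dn u) = card (dn v)"
  proof (rule ccontr)
    assume "card (dn u) \<noteq> card (dn v)"
    hence "card (dn u) < card (dn v) \<or> card (dn v) < card (dn u)" by linarith
    thus False
    proof
      assume lt: "card (dn u) < card (dn v)"
      have a: "coeff ?P (card (dn u)) - coeff (piP le \<tau> \<eta> Om (insert v C0)) (card (dn u)) = ?cu"
        using ku[of "card (dn u)"] by simp
      have b: "coeff ?P (card (dn u)) - coeff (piP le \<tau> \<eta> Om (insert v C0)) (card (dn u)) = 0"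
        using kv[of "card (dn u)"] lt by simp
      show False using a b pu by linarith
    next
      assume lt: "card (dn v) < card (dn u)"
      have a: "coeff ?P (card (dn v)) - coeff (piP le \<tau> \<eta> Om (insert v C0)) (card (dn v)) = ?cv"
        using kv[of "card (dn v)"] by simp
      have b: "coeff ?P (card (dn v)) - coeff (piP le \<tau> \<eta> Om (insert v C0)) (card (dn v)) = 0"
        using ku[of "card (dn v)"] lt by simp
      show False using a b pv by linarith
    qed
  qed
  moreover have "?cu = ?cv"
  proof -
    have a: "coeff ?P (card (dn u)) - coeff (piP le \<tau> \<eta> Om (insert v C0)) (card (dn u)) = ?cu"
      using ku[of "card (dn u)"] by simp
    have b: "coeff ?P (card (dn u)) - coeff (piP le \<tau> \<eta> Om (insert v C0)) (card (dn u)) = ?cv"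
      using kv[of "card (dn u)"] ceq by simp
    show ?thesis using a b by linarith
  qed
  ultimately show ?thesis by blast
qed

lemma hier_from:
  assumes h: "\<forall>u\<in>Om. \<forall>v\<in>Om. \<not> le u v \<longrightarrow> \<not> le v u \<longrightarrow> card (dn u) = card (dn v)"
  shows "hierarchical Om le"
  unfolding hierarchical_def
proof (intro ballI impI)
  fix u v assume u: "u \<in> Om" and v: "v \<in> Om" and lt: "len Om le u + 1 \<le> len Om le v"
  show "le u v"
  proof (rule ccontr)
    assume nuv: "\<not> le u v"
    have weak: "le a b" if a: "a \<in> Om" and b: "b \<in> Om" and ab: "card (dn a) < card (dn b)" for a b
    proof (rule ccontr)
      assume nab: "\<not> le a b"
      show False
      proof (cases "le b a")
        case True
        have "b \<noteq> a" using nab refl[OF a] by blast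
        thus False using dn_psub[OF b a True] ab by simp
      next
        case False
        have "card (dn a) = card (dn b)" using h a b nab False by blast
        thus False using ab by simp
      qed
    qed
    have fvu: "card (dn v) \<le> card (dn u)"
    proof (cases "le v u")
      case True
      have "v \<noteq> u" using nuv refl[OF u] by blast
      thus ?thesis using dn_psub[OF v u True] by simp
    next
      case False
      have "card (dn u) = card (dn v)" using h u v nuv False by blast
      thus ?thesis by simp
    qed
    obtain C where C: "is_chain Om le C" "v \<in> C" "\<forall>c\<in>C. le c v" "card C = len Om le v"
      using len_ex[OF v] by blast
    have CO: "C \<subseteq> Om" using C(1) unfolding is_chain_def by auto
    have fC: "finite C" using CO fin finite_subset by blast
    have cu: "le c u \<and> card (dn c) < card (dn u)" if c: "c \<in> C - {v}" for c
    proof -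
      have "card (dn c) < card (dn v)" using dn_psub[of c v] c C(3) CO v by blast
      hence "card (dn c) < card (dn u)" using fvu by simp
      moreover have "c \<in> Om" using c CO by blast
      ultimately show ?thesis using weak[of c u] u by blast
    qed
    have uC: "u \<notin> C - {v}"
    proof
      assume "u \<in> C - {v}"
      from cu[OF this] show False by simp
    qed
    let ?C' = "insert u (C - {v})"
    have chC: "\<forall>x\<in>C. \<forall>y\<in>C. le x y \<or> le y x" using C(1) unfolding is_chain_def by blast
    have ch: "is_chain Om le ?C'"
      unfolding is_chain_def
    proof (intro conjI ballI)
      show "?C' \<subseteq> Om" using CO u by blast
    next
      fix x y assume x: "x \<in> ?C'" and y: "y \<in> ?C'"
      show "le x y \<or> le y x"
      proof (cases "x = u")
        case True
        thus ?thesis using y cu refl[OF u] by blast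
      next
        case False
        hence x': "x \<in> C - {v}" using x by blast
        show ?thesis
        proof (cases "y = u")
          case True
          thus ?thesis using x' cu by blast
        next
          case False
          hence "y \<in> C" using y by blast
          thus ?thesis using x' chC by blast
        qed
      qed
    qed
    have top: "\<forall>c\<in>?C'. le c u" using cu refl[OF u] by blast
    have "card ?C' \<le> len Om le u" using len_ge[OF ch _ top] by simp
    moreover have "card ?C' = card C"
    proof -
      have "card ?C' = Suc (card (C - {v}))" using uC fC by simp
      also have "\<dots> = Suc (card C - 1)" using C(2) fC by (simp add: card_Diff_singleton)
      also have "\<dots> = card C"
      proof -
        have "card C > 0" using C(2) fC card_gt_0_iff by blast
        thus ?thesis by simp
      qed
      finally show ?thesis .
    qed
    ultimately show False using C(4) lt by simp
  qed
qed

end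


definition sw :: "'a \<Rightarrow> 'a \<Rightarrow> 'a \<Rightarrow> 'a" where
  "sw u v x = (if x = u then v else if x = v then u else x)"

lemma sw_sw[simp]: "sw u v (sw u v x) = x" unfolding sw_def by auto

lemma sw_inj: "inj (sw u v)" by (metis injI sw_sw)

lemma sw_mem: "x \<in> sw u v ` S \<longleftrightarrow> sw u v x \<in> S"
proof
  assume "x \<in> sw u v ` S"
  then obtain y where "y \<in> S" "x = sw u v y" by blast
  thus "sw u v x \<in> S" by simp
next
  assume "sw u v x \<in> S"
  hence "sw u v (sw u v x) \<in> sw u v ` S" by blast
  thus "x \<in> sw u v ` S" by simp
qed

lemma sw_fix: assumes "u \<in> S \<longleftrightarrow> v \<in> S" shows "sw u v ` S = S"
proof (rule set_eqI)
  fix x show "x \<in> sw u v ` S \<longleftrightarrow> x \<in> S" unfolding sw_mem using assms by (auto simp: sw_def)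
qed

lemma sw_img_img[simp]: "sw u v ` (sw u v ` A) = A"
  by (simp add: image_image)

context posw begin

lemma le_iff_hier: assumes H: "hierarchical Om le" and x: "x \<in> Om" and y: "y \<in> Om"
  shows "le x y \<longleftrightarrow> x = y \<or> len Om le x < len Om le y"
proof
  assume "le x y"
  thus "x = y \<or> len Om le x < len Om le y" using len_mono[OF x y] by blast
next
  assume "x = y \<or> len Om le x < len Om le y"
  thus "le x y"
  proof
    assume "x = y" thus ?thesis using refl[OF x] by simp
  next
    assume "len Om le x < len Om le y"
    hence "len Om le x + 1 \<le> len Om le y" by simp
    thus ?thesis using H x y unfolding hierarchical_def by blast
  qed
qed

lemma nonmax_transfer:
  assumes H: "hierarchical Om le" and a: "a \<in> Om" and b: "b \<in> Om" and ab: "len Om le a = len Om le b"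
  and I: "I \<in> down_sets le Om" and aI: "a \<in> I - maxel le I"
  shows "b \<in> I - maxel le I"
proof -
  have IO: "I \<subseteq> Om" using DS_sub[OF I] .
  obtain z where z: "z \<in> I" "le a z" "z \<noteq> a" using aI unfolding maxel_def by blast
  have zO: "z \<in> Om" using z IO by blast
  have "len Om le a < len Om le z" using le_iff_hier[OF H a zO] z by blast
  hence lbz: "len Om le b < len Om le z" using ab by simp
  hence bz: "le b z" using le_iff_hier[OF H b zO] by blast
  have bI: "b \<in> I" using I z(1) b bz unfolding down_sets_def by blast
  have "z \<noteq> b" using lbz by blast
  hence "b \<notin> maxel le I" using z(1) bz unfolding maxel_def by blast
  thus ?thesis using bI by blast
qed

context
  fixes u v assumes H: "hierarchical Om le" and u: "u \<in> Om" and v: "v \<in> Om"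
    and luv: "len Om le u = len Om le v"
begin

lemma sw_Om: "x \<in> Om \<Longrightarrow> sw u v x \<in> Om" using u v unfolding sw_def by auto

lemma sw_len: "len Om le (sw u v x) = len Om le x" using luv unfolding sw_def by auto

lemma sw_le: assumes x: "x \<in> Om" and y: "y \<in> Om"
  shows "le (sw u v x) (sw u v y) \<longleftrightarrow> le x y"
proof -
  have "le (sw u v x) (sw u v y) \<longleftrightarrow> sw u v x = sw u v y \<or> len Om le (sw u v x) < len Om le (sw u v y)"
    using le_iff_hier[OF H sw_Om[OF x] sw_Om[OF y]] .
  also have "\<dots> \<longleftrightarrow> x = y \<or> len Om le x < len Om le y"
    unfolding sw_len using sw_inj[of u v] by (metis sw_sw)
  also have "\<dots> \<longleftrightarrow> le x y" using le_iff_hier[OF H x y] by simp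
  finally show ?thesis .
qed

lemma sw_sub: "A \<subseteq> Om \<Longrightarrow> sw u v ` A \<subseteq> Om" using sw_Om by blast

lemma sw_DS: assumes I: "I \<in> down_sets le Om" shows "sw u v ` I \<in> down_sets le Om"
  unfolding down_sets_def
proof (intro CollectI conjI ballI impI)
  have IO: "I \<subseteq> Om" using DS_sub[OF I] .
  show "sw u v ` I \<subseteq> Om" using sw_sub[OF IO] .
  fix x y assume x: "x \<in> sw u v ` I" and y: "y \<in> Om" and yx: "le y x"
  have x': "sw u v x \<in> I" using x by (simp only: sw_mem)
  have y': "sw u v y \<in> Om" using sw_Om[OF y] .
  have x'O: "sw u v x \<in> Om" using x' IO by blast
  have "le (sw u v y) (sw u v x)" using sw_le[OF y' x'O] yx by simp
  hence "sw u v y \<in> I" using I x' y' unfolding down_sets_def by blast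
  thus "y \<in> sw u v ` I" by (simp only: sw_mem)
qed

lemma sw_US: assumes C: "C \<in> up_sets le Om" shows "sw u v ` C \<in> up_sets le Om"
  unfolding up_sets_def
proof (intro CollectI conjI ballI impI)
  have CO: "C \<subseteq> Om" using US_sub[OF C] .
  show "sw u v ` C \<subseteq> Om" using sw_sub[OF CO] .
  fix x y assume x: "x \<in> sw u v ` C" and y: "y \<in> Om" and xy: "le x y"
  have x': "sw u v x \<in> C" using x by (simp only: sw_mem)
  have y': "sw u v y \<in> Om" using sw_Om[OF y] .
  have x'O: "sw u v x \<in> Om" using x' CO by blast
  have "le (sw u v x) (sw u v y)" using sw_le[OF x'O y'] xy by simp
  hence "sw u v y \<in> C" using C x' y' unfolding up_sets_def by blast
  thus "y \<in> sw u v ` C" by (simp only: sw_mem)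
qed

lemma sw_maxel: assumes IO: "I \<subseteq> Om" shows "maxel le (sw u v ` I) = sw u v ` maxel le I"
proof (rule set_eqI)
  fix y
  let ?y = "sw u v y"
  show "y \<in> maxel le (sw u v ` I) \<longleftrightarrow> y \<in> sw u v ` maxel le I"
  proof
    assume "y \<in> maxel le (sw u v ` I)"
    hence y0: "y \<in> sw u v ` I" and y2: "\<forall>z\<in>sw u v ` I. le y z \<longrightarrow> z = y" unfolding maxel_def by blast+
    have y1: "?y \<in> I" using y0 by (simp only: sw_mem)
    have "\<forall>z\<in>I. le ?y z \<longrightarrow> z = ?y"
    proof (intro ballI impI)
      fix z assume z: "z \<in> I" and yz: "le ?y z"
      have "le (sw u v ?y) (sw u v z)" using sw_le[of ?y z] y1 z IO yz by blast
      hence "sw u v z = y" using y2 z by simp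
      thus "z = ?y" by (metis sw_sw)
    qed
    hence "?y \<in> maxel le I" using y1 unfolding maxel_def by blast
    thus "y \<in> sw u v ` maxel le I" by (simp only: sw_mem)
  next
    assume "y \<in> sw u v ` maxel le I"
    hence "?y \<in> maxel le I" by (simp only: sw_mem)
    hence y1: "?y \<in> I" and y2: "\<forall>z\<in>I. le ?y z \<longrightarrow> z = ?y" unfolding maxel_def by blast+
    have "\<forall>z\<in>sw u v ` I. le y z \<longrightarrow> z = y"
    proof (intro ballI impI)
      fix z assume z: "z \<in> sw u v ` I" and yz: "le y z"
      have z1: "sw u v z \<in> I" using z by (simp only: sw_mem)
      have "le (sw u v ?y) (sw u v (sw u v z))" using yz by simp
      hence "le ?y (sw u v z)" using sw_le[of ?y "sw u v z"] y1 z1 IO by blast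
      hence "sw u v z = ?y" using y2 z1 by blast
      thus "z = y" by (metis sw_sw)
    qed
    moreover have "y \<in> sw u v ` I" using y1 by (simp only: sw_mem)
    ultimately show "y \<in> maxel le (sw u v ` I)" unfolding maxel_def by blast
  qed
qed

lemma inv_nonmax: assumes I: "I \<in> down_sets le Om"
  shows "sw u v ` (I - maxel le I) = I - maxel le I"
proof (rule sw_fix)
  show "u \<in> I - maxel le I \<longleftrightarrow> v \<in> I - maxel le I"
    using nonmax_transfer[OF H u v luv I] nonmax_transfer[OF H v u luv[symmetric] I] by blast
qed

lemma phi_sw: assumes I: "I \<in> down_sets le Om" and e: "\<eta> u = \<eta> v"
  shows "phi le \<tau> \<eta> (sw u v ` C) (sw u v ` I) = phi le \<tau> \<eta> C I"
proof -
  let ?s = "sw u v"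
  have IO: "I \<subseteq> Om" using DS_sub[OF I] .
  have inj: "inj ?s" by (rule sw_inj)
  have injo: "inj_on ?s A" for A using inj by (simp add: inj_on_def inj_def)
  have M: "maxel le (?s ` I) = ?s ` maxel le I" by (rule sw_maxel[OF IO])
  have e1: "?s ` I \<inter> ?s ` C = ?s ` (I \<inter> C)" using image_Int[OF inj] by simp
  have e2: "?s ` I - ?s ` maxel le I = ?s ` (I - maxel le I)" using image_set_diff[OF inj] by simp
  have e3: "?s ` maxel le I - ?s ` C = ?s ` (maxel le I - C)" using image_set_diff[OF inj] by simp
  have e4: "(?s ` (I \<inter> C) \<subseteq> ?s ` maxel le I) = (I \<inter> C \<subseteq> maxel le I)" by (rule inj_image_subset_iff[OF inj])
  have e5: "card (?s ` (I \<inter> C)) = card (I \<inter> C)" by (rule card_image[OF injo])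
  have e6: "prod \<tau> (?s ` (I - maxel le I)) = prod \<tau> (I - maxel le I)" using inv_nonmax[OF I] by simp
  have ee: "\<eta> \<circ> ?s = \<eta>" using e unfolding sw_def by (auto simp: fun_eq_iff)
  have e7: "prod \<eta> (?s ` (maxel le I - C)) = prod \<eta> (maxel le I - C)"
    using prod.reindex[OF injo, of \<eta>] ee by simp
  show ?thesis unfolding phi_def M e1 e2 e3 e4 e5 e6 e7 ..
qed

lemma pi_sw: assumes e: "\<eta> u = \<eta> v"
  shows "piP le \<tau> \<eta> Om (sw u v ` C) = piP le \<tau> \<eta> Om C"
proof -
  let ?s = "sw u v"
  have inj: "inj ?s" by (rule sw_inj)
  have injo: "inj_on ?s A" for A using inj by (simp add: inj_on_def inj_def)
  have DSeq: "(image ?s) ` down_sets le Om = down_sets le Om"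
  proof
    show "(image ?s) ` down_sets le Om \<subseteq> down_sets le Om" using sw_DS by blast
  next
    show "down_sets le Om \<subseteq> (image ?s) ` down_sets le Om"
    proof
      fix I assume I: "I \<in> down_sets le Om"
      have "I = ?s ` (?s ` I)" by simp
      thus "I \<in> (image ?s) ` down_sets le Om" using sw_DS[OF I] by blast
    qed
  qed
  have injI: "inj_on (image ?s) (down_sets le Om)"
    using inj_image_eq_iff[OF inj] unfolding inj_on_def by blast
  have "piP le \<tau> \<eta> Om (?s ` C) = (\<Sum>I\<in>(image ?s) ` down_sets le Om. monom (phi le \<tau> \<eta> (?s ` C) I) (card I))"
    unfolding piP_def DSeq ..
  also have "\<dots> = (\<Sum>I\<in>down_sets le Om. monom (phi le \<tau> \<eta> (?s ` C) (?s ` I)) (card (?s ` I)))"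
    using sum.reindex[OF injI] by (simp add: comp_def)
  also have "\<dots> = (\<Sum>I\<in>down_sets le Om. monom (phi le \<tau> \<eta> C I) (card I))"
    by (rule sum.cong[OF HOL.refl]) (simp add: phi_sw[OF _ e] card_image[OF injo])
  also have "\<dots> = piP le \<tau> \<eta> Om C" unfolding piP_def ..
  finally show ?thesis .
qed

end

lemma eq_size:
  assumes H: "hierarchical Om le" and He: "\<forall>u\<in>Om. \<forall>v\<in>Om. len Om le u = len Om le v \<longrightarrow> \<eta> u = \<eta> v"
  shows "C \<in> up_sets le Om \<Longrightarrow> D \<in> up_sets le Om \<Longrightarrow> card C = card D \<Longrightarrow> piP le \<tau> \<eta> Om C = piP le \<tau> \<eta> Om D"
proof (induction "card (C - D)" arbitrary: C)
  case 0
  have fC: "finite C" using US_sub[OF 0(2)] fin finite_subset by blast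
  have fD: "finite D" using US_sub[OF 0(3)] fin finite_subset by blast
  have "C - D = {}" using 0(1) fC by simp
  hence "C \<subseteq> D" by blast
  hence "C = D" using card_subset_eq[OF fD] 0(4) by blast
  thus ?case by simp
next
  case (Suc n)
  have CO: "C \<subseteq> Om" using US_sub[OF Suc(3)] .
  have DO: "D \<subseteq> Om" using US_sub[OF Suc(4)] .
  have fC: "finite C" using CO fin finite_subset by blast
  have fD: "finite D" using DO fin finite_subset by blast
  obtain a where a: "a \<in> C - D" using Suc(2) by (metis card.empty ex_in_conv nat.simps(3))
  have "D - C \<noteq> {}"
  proof
    assume "D - C = {}"
    hence "D \<subseteq> C" by blast
    hence "D = C" using card_subset_eq[OF fC] Suc(5) by simp
    thus False using a by blast
  qed
  then obtain b where b: "b \<in> D - C" by blast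
  have aO: "a \<in> Om" and bO: "b \<in> Om" using a b CO DO by blast+
  have lab: "len Om le a = len Om le b"
  proof (rule ccontr)
    assume "len Om le a \<noteq> len Om le b"
    hence "len Om le a < len Om le b \<or> len Om le b < len Om le a" by linarith
    thus False
    proof
      assume "len Om le a < len Om le b"
      hence "le a b" using le_iff_hier[OF H aO bO] by blast
      hence "b \<in> C" using Suc(3) a bO unfolding up_sets_def by blast
      thus False using b by blast
    next
      assume "len Om le b < len Om le a"
      hence "le b a" using le_iff_hier[OF H bO aO] by blast
      hence "a \<in> D" using Suc(4) b aO unfolding up_sets_def by blast
      thus False using a by blast
    qed
  qed
  let ?C' = "sw a b ` C"
  have C'eq: "?C' = insert b (C - {a})"
  proof (rule set_eqI)
    fix x show "x \<in> ?C' \<longleftrightarrow> x \<in> insert b (C - {a})"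
      unfolding sw_mem using a b by (auto simp: sw_def)
  qed
  have C'US: "?C' \<in> up_sets le Om" using sw_US[OF H aO bO lab Suc(3)] .
  have cC': "card ?C' = card D" using card_image[of "sw a b" C] sw_inj[of a b] Suc(5)
    by (simp add: inj_on_def inj_def)
  have "?C' - D = (C - D) - {a}" unfolding C'eq using b by blast
  hence "card (?C' - D) = n" using Suc(2) a fC by simp
  hence "piP le \<tau> \<eta> Om ?C' = piP le \<tau> \<eta> Om D" using Suc(1)[of ?C'] C'US Suc(4) cC' by simp
  moreover have "piP le \<tau> \<eta> Om ?C' = piP le \<tau> \<eta> Om C"
    using pi_sw[OF H aO bO lab] He aO bO lab by blast
  ultimately show ?case by simp
qed

end


context posw begin
lemma c2_c4:
  assumes h2: "\<forall>C\<in>up_sets le Om. \<forall>D\<in>up_sets le Om. card C = card D \<longrightarrow> piP le \<tau> \<eta> Om C = piP le \<tau> \<eta> Om D"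
  shows "hierarchical Om le \<and> (\<forall>u\<in>Om. \<forall>v\<in>Om. len Om le u = len Om le v \<longrightarrow> \<eta> u = \<eta> v)"
proof -
  have inc: "\<forall>u\<in>Om. \<forall>v\<in>Om. \<not> le u v \<longrightarrow> \<not> le v u \<longrightarrow> card (dn u) = card (dn v)"
    using incomp_eq[OF h2] by blast
  have H: "hierarchical Om le" using hier_from[OF inc] .
  have "\<eta> u = \<eta> v" if u: "u \<in> Om" and v: "v \<in> Om" and l: "len Om le u = len Om le v" for u v
  proof (cases "u = v")
    case True thus ?thesis by simp
  next
    case False
    have nuv: "\<not> le u v" using le_iff_hier[OF H u v] False l by simp
    have nvu: "\<not> le v u" using le_iff_hier[OF H v u] False l by simp
    have eq: "(1 + \<eta> u) * prod \<tau> (dn u - {u}) = (1 + \<eta> v) * prod \<tau> (dn v - {v})"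
      using incomp_eq[OF h2 u v nuv nvu] by blast
    have S: "dn u - {u} = dn v - {v}"
    proof (rule set_eqI)
      fix y
      show "y \<in> dn u - {u} \<longleftrightarrow> y \<in> dn v - {v}"
      proof (cases "y \<in> Om")
        case True
        have "y \<in> dn u - {u} \<longleftrightarrow> len Om le y < len Om le u"
          unfolding dn_def using le_iff_hier[OF H True u] True by auto
        moreover have "y \<in> dn v - {v} \<longleftrightarrow> len Om le y < len Om le v"
          unfolding dn_def using le_iff_hier[OF H True v] True by auto
        ultimately show ?thesis using l by simp
      next
        case False thus ?thesis unfolding dn_def by simp
      qed
    qed
    have pos: "prod \<tau> (dn u - {u}) > 0" using tau_pos unfolding dn_def by (intro prod_pos) auto
    from eq S pos show ?thesis by simp
  qed
  thus ?thesis using H by blast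
qed
end

theorem theorem3p5:
  fixes Om :: "'a set" and le :: "'a \<Rightarrow> 'a \<Rightarrow> bool" and \<tau> \<eta> :: "'a \<Rightarrow> real"
  assumes fin: "finite Om"
    and poset: "is_poset Om le"
    and tau_pos: "\<forall>i\<in>Om. \<tau> i > 0"
    and eta_gt: "\<forall>i\<in>Om. \<eta> i > -1"
    and eta_nz: "\<forall>i\<in>Om. \<eta> i \<noteq> 0"
  defines "\<Theta> \<equiv> piP le \<tau> \<eta> Om ` up_sets le Om"
  shows "card \<Theta> \<ge> card Om + 1 \<and>
    (card \<Theta> = card Om + 1 \<longleftrightarrow>
       (\<forall>C\<in>up_sets le Om. \<forall>D\<in>up_sets le Om. card C = card D \<longrightarrow> piP le \<tau> \<eta> Om C = piP le \<tau> \<eta> Om D)) \<and>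
    (card \<Theta> = card Om + 1 \<longleftrightarrow>
       (\<forall>C\<in>up_sets le Om. \<forall>D\<in>up_sets le Om. piP le \<tau> \<eta> Om C = piP le \<tau> \<eta> Om D \<longleftrightarrow> card C = card D)) \<and>
    (card \<Theta> = card Om + 1 \<longleftrightarrow>
       (hierarchical Om le \<and> (\<forall>u\<in>Om. \<forall>v\<in>Om. len Om le u = len Om le v \<longrightarrow> \<eta> u = \<eta> v)))"
proof -
  interpret posw Om le \<tau> \<eta>
    using fin poset tau_pos eta_gt by (simp add: posw_def pos_def posw_axioms_def)
  let ?c2 = "\<forall>C\<in>up_sets le Om. \<forall>D\<in>up_sets le Om. card C = card D \<longrightarrow> piP le \<tau> \<eta> Om C = piP le \<tau> \<eta> Om D"
  let ?c3 = "\<forall>C\<in>up_sets le Om. \<forall>D\<in>up_sets le Om. piP le \<tau> \<eta> Om C = piP le \<tau> \<eta> Om D \<longleftrightarrow> card C = card D"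
  let ?c4 = "hierarchical Om le \<and> (\<forall>u\<in>Om. \<forall>v\<in>Om. len Om le u = len Om le v \<longrightarrow> \<eta> u = \<eta> v)"
  have p1: "card Om + 1 \<le> card \<Theta>" using P1 unfolding \<Theta>_def .
  have i13: "?c3" if "card \<Theta> = card Om + 1" using P4 that unfolding \<Theta>_def by blast
  have i32: "?c2" if "?c3" using that by blast
  have i21: "card \<Theta> = card Om + 1" if "?c2" using P2[OF that] p1 unfolding \<Theta>_def by simp
  have i24: "?c4" if "?c2" using c2_c4[OF that] .
  have i42: "?c2" if "?c4" using eq_size that by blast
  show ?thesis using p1 i13 i32 i21 i24 i42 by blast
qed


end
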